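(* Let $\mathsf{C}$ be a (strict) 2-category, let $\Delta:\mathsf{C}\to\mathsf{Cat}$ be a (strict) 2-functor, and let $\mathrm{W}$ be a Lawvere weight on $\mathsf{C}$. Then the 2-functor interleaving distance $d_{\Delta,\mathrm{W}}$ is an extended pseudometric on $\mathrm{Im}(\Delta)$ (i.e. it takes values in $[0,\infty]$, vanishes on the diagonal, is symmetric, and satisfies the triangle inequality).
   Context: $\mathsf{Cat}$ is the 2-category of small categories, functors and natural transformations. Composition of 1-morphisms is written $gf=g\circ f$. For $A\in\mathsf C_0$, $\Delta(A)$ is a small category; for $f:A\to B$, $\Delta_f:\Delta(A)\to\Delta(B)$ is a functor; for a 2-morphism $\alpha:f\Rightarrow g$, $\Delta(\alpha):\Delta_f\Rightarrow\Delta_g$ is a natural transformation with components $\Delta(\alpha)_X$; $\Delta$ preserves identities and vertical and horizontal composition. $\mathrm{Im}(\Delta)=\bigcup_{A\in\mathsf C_0}\Delta(A)_0$. A Lawvere weight on $\mathsf{C}$ is a function $\mathrm{W}$ from 1-morphisms to $\mathbb{R}\cup\{\infty\}$ with $\mathrm{W}(g)\ge0$, $\mathrm{W}(1_A)=0$, and $\mathrm{W}(gf)\le\mathrm{W}(g)+\mathrm{W}(f)$ for composable $f,g$. For $X\in\Delta(A)_0$, $Y\in\Delta(B)_0$, $g\in\mathsf C_1(B,A)$, $h\in\mathsf C_1(A,B)$, $X$ and $Y$ are $(g,h)$-interleaved if there exist morphisms $\phi:X\to\Delta_g(Y)$ in $\Delta(A)$, $\psi:Y\to\Delta_h(X)$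 in $\Delta(B)$ and 2-morphisms $\alpha:1_A\Rightarrow gh$, $\beta:1_B\Rightarrow hg$ with $\Delta_g(\psi)\circ\phi=\Delta(\alpha)_X$ and $\Delta_h(\phi)\circ\psi=\Delta(\beta)_Y$. Then $d_{\Delta,\mathrm{W}}(X,Y)=\inf\{\max\{\mathrm{W}(g),\mathrm{W}(h)\}:X,Y\ (g,h)\text{-interleaved}\}$, with $\inf\emptyset=\infty$. *)

theory Defs
  imports "HOL-Library.Extended_Real"
begin

text \<open>A strict 2-category with objects of type 'o, 1-morphisms of type 'm and
2-morphisms of type 't.  comp1 g f is g composed after f (written gf);
vcomp b a is vertical composition (a first); hcomp b a is horizontal composition
of a : f => g (A -> B) and b : h => k (B -> C), giving hf => kg.\<close>

record ('o,'m,'t) two_cat =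
  Ob    :: "'o set"
  Mor   :: "'m set"
  dom1  :: "'m \<Rightarrow> 'o"
  cod1  :: "'m \<Rightarrow> 'o"
  id1   :: "'o \<Rightarrow> 'm"
  comp1 :: "'m \<Rightarrow> 'm \<Rightarrow> 'm"
  Cell  :: "'t set"
  src2  :: "'t \<Rightarrow> 'm"
  tgt2  :: "'t \<Rightarrow> 'm"
  id2   :: "'m \<Rightarrow> 't"
  vcomp :: "'t \<Rightarrow> 't \<Rightarrow> 't"
  hcomp :: "'t \<Rightarrow> 't \<Rightarrow> 't"

definition hom1 :: "('o,'m,'t) two_cat \<Rightarrow> 'o \<Rightarrow> 'o \<Rightarrow> 'm set" where
  "hom1 C A B = {f \<in> Mor C. dom1 C f = A \<and> cod1 C f = B}"

definition cell2 :: "('o,'m,'t) two_cat \<Rightarrow> 'm \<Rightarrow> 'm \<Rightarrow> 't set" where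
  "cell2 C f g = {\<alpha> \<in> Cell C. src2 C \<alpha> = f \<and> tgt2 C \<alpha> = g}"

definition strict_two_category :: "('o,'m,'t) two_cat \<Rightarrow> bool" where
  "strict_two_category C \<longleftrightarrow>
    \<comment> \<open>underlying 1-category\<close>
    (\<forall>f \<in> Mor C. dom1 C f \<in> Ob C \<and> cod1 C f \<in> Ob C) \<and>
    (\<forall>A \<in> Ob C. id1 C A \<in> hom1 C A A) \<and>
    (\<forall>A \<in> Ob C. \<forall>B \<in> Ob C. \<forall>D \<in> Ob C. \<forall>f \<in> hom1 C A B. \<forall>g \<in> hom1 C B D.
        comp1 C g f \<in> hom1 C A D) \<and>
    (\<forall>f \<in> Mor C. comp1 C f (id1 C (dom1 C f)) = f \<and> comp1 C (id1 C (cod1 C f)) f = f) \<and>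
    (\<forall>f \<in> Mor C. \<forall>g \<in> Mor C. \<forall>h \<in> Mor C. cod1 C f = dom1 C g \<longrightarrow> cod1 C g = dom1 C h \<longrightarrow>
        comp1 C h (comp1 C g f) = comp1 C (comp1 C h g) f) \<and>
    \<comment> \<open>2-cells go between parallel 1-morphisms\<close>
    (\<forall>\<alpha> \<in> Cell C. src2 C \<alpha> \<in> Mor C \<and> tgt2 C \<alpha> \<in> Mor C \<and>
        dom1 C (src2 C \<alpha>) = dom1 C (tgt2 C \<alpha>) \<and> cod1 C (src2 C \<alpha>) = cod1 C (tgt2 C \<alpha>)) \<and>
    \<comment> \<open>vertical composition: each hom is a category\<close>
    (\<forall>f \<in> Mor C. id2 C f \<in> cell2 C f f) \<and>
    (\<forall>\<alpha> \<in> Cell C. \<forall>\<beta> \<in> Cell C. tgt2 C \<alpha> = src2 C \<beta> \<longrightarrow>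
        vcomp C \<beta> \<alpha> \<in> cell2 C (src2 C \<alpha>) (tgt2 C \<beta>)) \<and>
    (\<forall>\<alpha> \<in> Cell C. vcomp C \<alpha> (id2 C (src2 C \<alpha>)) = \<alpha> \<and> vcomp C (id2 C (tgt2 C \<alpha>)) \<alpha> = \<alpha>) \<and>
    (\<forall>\<alpha> \<in> Cell C. \<forall>\<beta> \<in> Cell C. \<forall>\<gamma> \<in> Cell C. tgt2 C \<alpha> = src2 C \<beta> \<longrightarrow> tgt2 C \<beta> = src2 C \<gamma> \<longrightarrow>
        vcomp C \<gamma> (vcomp C \<beta> \<alpha>) = vcomp C (vcomp C \<gamma> \<beta>) \<alpha>) \<and>
    \<comment> \<open>horizontal composition\<close>
    (\<forall>\<alpha> \<in> Cell C. \<forall>\<beta> \<in> Cell C. cod1 C (src2 C \<alpha>) = dom1 C (src2 C \<beta>) \<longrightarrow>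
        hcomp C \<beta> \<alpha> \<in> cell2 C (comp1 C (src2 C \<beta>) (src2 C \<alpha>)) (comp1 C (tgt2 C \<beta>) (tgt2 C \<alpha>))) \<and>
    (\<forall>\<alpha> \<in> Cell C. hcomp C \<alpha> (id2 C (id1 C (dom1 C (src2 C \<alpha>)))) = \<alpha> \<and>
        hcomp C (id2 C (id1 C (cod1 C (src2 C \<alpha>)))) \<alpha> = \<alpha>) \<and>
    (\<forall>\<alpha> \<in> Cell C. \<forall>\<beta> \<in> Cell C. \<forall>\<gamma> \<in> Cell C.
        cod1 C (src2 C \<alpha>) = dom1 C (src2 C \<beta>) \<longrightarrow> cod1 C (src2 C \<beta>) = dom1 C (src2 C \<gamma>) \<longrightarrow>
        hcomp C \<gamma> (hcomp C \<beta> \<alpha>) = hcomp C (hcomp C \<gamma> \<beta>) \<alpha>) \<and>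
    (\<forall>f \<in> Mor C. \<forall>g \<in> Mor C. cod1 C f = dom1 C g \<longrightarrow>
        hcomp C (id2 C g) (id2 C f) = id2 C (comp1 C g f)) \<and>
    \<comment> \<open>interchange law\<close>
    (\<forall>\<alpha> \<in> Cell C. \<forall>\<beta> \<in> Cell C. \<forall>\<gamma> \<in> Cell C. \<forall>\<delta> \<in> Cell C.
        tgt2 C \<alpha> = src2 C \<beta> \<longrightarrow> tgt2 C \<gamma> = src2 C \<delta> \<longrightarrow>
        cod1 C (src2 C \<alpha>) = dom1 C (src2 C \<gamma>) \<longrightarrow>
        hcomp C (vcomp C \<delta> \<gamma>) (vcomp C \<beta> \<alpha>) = vcomp C (hcomp C \<delta> \<beta>) (hcomp C \<gamma> \<alpha>))"

text \<open>Delta(A) is the (small) category with objects DOb A, morphisms DMor A,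
domain/codomain Ddom A / Dcod A, identities Did A and composition Dcomp A
(Dcomp A v u = v after u).  For a 1-morphism f, Fob f and Fmor f are the object
and morphism maps of the functor Delta_f; for a 2-morphism a, Ncomp a X is the
component Delta(a)_X.\<close>

record ('o,'m,'t,'x,'a) two_functor =
  DOb   :: "'o \<Rightarrow> 'x set"
  DMor  :: "'o \<Rightarrow> 'a set"
  Ddom  :: "'o \<Rightarrow> 'a \<Rightarrow> 'x"
  Dcod  :: "'o \<Rightarrow> 'a \<Rightarrow> 'x"
  Did   :: "'o \<Rightarrow> 'x \<Rightarrow> 'a"
  Dcomp :: "'o \<Rightarrow> 'a \<Rightarrow> 'a \<Rightarrow> 'a"
  Fob   :: "'m \<Rightarrow> 'x \<Rightarrow> 'x"
  Fmor  :: "'m \<Rightarrow> 'a \<Rightarrow> 'a"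
  Ncomp :: "'t \<Rightarrow> 'x \<Rightarrow> 'a"

definition Dhom :: "('o,'m,'t,'x,'a) two_functor \<Rightarrow> 'o \<Rightarrow> 'x \<Rightarrow> 'x \<Rightarrow> 'a set" where
  "Dhom D A X Y = {u \<in> DMor D A. Ddom D A u = X \<and> Dcod D A u = Y}"

definition is_category_at :: "('o,'m,'t,'x,'a) two_functor \<Rightarrow> 'o \<Rightarrow> bool" where
  "is_category_at D A \<longleftrightarrow>
    (\<forall>u \<in> DMor D A. Ddom D A u \<in> DOb D A \<and> Dcod D A u \<in> DOb D A) \<and>
    (\<forall>X \<in> DOb D A. Did D A X \<in> Dhom D A X X) \<and>
    (\<forall>u \<in> DMor D A. \<forall>v \<in> DMor D A. Dcod D A u = Ddom D A v \<longrightarrow>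
        Dcomp D A v u \<in> Dhom D A (Ddom D A u) (Dcod D A v)) \<and>
    (\<forall>u \<in> DMor D A. Dcomp D A u (Did D A (Ddom D A u)) = u \<and> Dcomp D A (Did D A (Dcod D A u)) u = u) \<and>
    (\<forall>u \<in> DMor D A. \<forall>v \<in> DMor D A. \<forall>w \<in> DMor D A.
        Dcod D A u = Ddom D A v \<longrightarrow> Dcod D A v = Ddom D A w \<longrightarrow>
        Dcomp D A w (Dcomp D A v u) = Dcomp D A (Dcomp D A w v) u)"

definition strict_two_functor_to_Cat ::
  "('o,'m,'t) two_cat \<Rightarrow> ('o,'m,'t,'x,'a) two_functor \<Rightarrow> bool" where
  "strict_two_functor_to_Cat C D \<longleftrightarrow>
    (\<forall>A \<in> Ob C. is_category_at D A) \<and>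
    \<comment> \<open>Delta_f is a functor Delta(A) -> Delta(B)\<close>
    (\<forall>f \<in> Mor C.
       (\<forall>X \<in> DOb D (dom1 C f). Fob D f X \<in> DOb D (cod1 C f)) \<and>
       (\<forall>u \<in> DMor D (dom1 C f). Fmor D f u \<in>
          Dhom D (cod1 C f) (Fob D f (Ddom D (dom1 C f) u)) (Fob D f (Dcod D (dom1 C f) u))) \<and>
       (\<forall>X \<in> DOb D (dom1 C f). Fmor D f (Did D (dom1 C f) X) = Did D (cod1 C f) (Fob D f X)) \<and>
       (\<forall>u \<in> DMor D (dom1 C f). \<forall>v \<in> DMor D (dom1 C f). Dcod D (dom1 C f) u = Ddom D (dom1 C f) v \<longrightarrow>
          Fmor D f (Dcomp D (dom1 C f) v u) = Dcomp D (cod1 C f) (Fmor D f v) (Fmor D f u))) \<and>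
    \<comment> \<open>Delta(alpha) is a natural transformation Delta_f => Delta_g\<close>
    (\<forall>\<alpha> \<in> Cell C. \<forall>X \<in> DOb D (dom1 C (src2 C \<alpha>)).
       Ncomp D \<alpha> X \<in> Dhom D (cod1 C (src2 C \<alpha>)) (Fob D (src2 C \<alpha>) X) (Fob D (tgt2 C \<alpha>) X)) \<and>
    (\<forall>\<alpha> \<in> Cell C. \<forall>u \<in> DMor D (dom1 C (src2 C \<alpha>)).
       Dcomp D (cod1 C (src2 C \<alpha>)) (Fmor D (tgt2 C \<alpha>) u) (Ncomp D \<alpha> (Ddom D (dom1 C (src2 C \<alpha>)) u))
       = Dcomp D (cod1 C (src2 C \<alpha>)) (Ncomp D \<alpha> (Dcod D (dom1 C (src2 C \<alpha>)) u)) (Fmor D (src2 C \<alpha>) u)) \<and>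
    \<comment> \<open>preservation of identity 1-morphisms and of composition of 1-morphisms\<close>
    (\<forall>A \<in> Ob C. (\<forall>X \<in> DOb D A. Fob D (id1 C A) X = X) \<and> (\<forall>u \<in> DMor D A. Fmor D (id1 C A) u = u)) \<and>
    (\<forall>f \<in> Mor C. \<forall>g \<in> Mor C. cod1 C f = dom1 C g \<longrightarrow>
       (\<forall>X \<in> DOb D (dom1 C f). Fob D (comp1 C g f) X = Fob D g (Fob D f X)) \<and>
       (\<forall>u \<in> DMor D (dom1 C f). Fmor D (comp1 C g f) u = Fmor D g (Fmor D f u))) \<and>
    \<comment> \<open>preservation of identity 2-morphisms\<close>
    (\<forall>f \<in> Mor C. \<forall>X \<in> DOb D (dom1 C f). Ncomp D (id2 C f) X = Did D (cod1 C f) (Fob D f X)) \<and>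
    \<comment> \<open>preservation of vertical composition\<close>
    (\<forall>\<alpha> \<in> Cell C. \<forall>\<beta> \<in> Cell C. tgt2 C \<alpha> = src2 C \<beta> \<longrightarrow>
       (\<forall>X \<in> DOb D (dom1 C (src2 C \<alpha>)).
          Ncomp D (vcomp C \<beta> \<alpha>) X = Dcomp D (cod1 C (src2 C \<alpha>)) (Ncomp D \<beta> X) (Ncomp D \<alpha> X))) \<and>
    \<comment> \<open>preservation of horizontal composition:
        alpha : f => g : A -> B, beta : h => k : B -> C'\<close>
    (\<forall>\<alpha> \<in> Cell C. \<forall>\<beta> \<in> Cell C. cod1 C (src2 C \<alpha>) = dom1 C (src2 C \<beta>) \<longrightarrow>
       (\<forall>X \<in> DOb D (dom1 C (src2 C \<alpha>)).
          Ncomp D (hcomp C \<beta> \<alpha>) X =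
            Dcomp D (cod1 C (src2 C \<beta>)) (Fmor D (tgt2 C \<beta>) (Ncomp D \<alpha> X))
                                         (Ncomp D \<beta> (Fob D (src2 C \<alpha>) X))))"

definition lawvere_weight :: "('o,'m,'t) two_cat \<Rightarrow> ('m \<Rightarrow> ereal) \<Rightarrow> bool" where
  "lawvere_weight C W \<longleftrightarrow>
    (\<forall>g \<in> Mor C. W g \<ge> 0) \<and>
    (\<forall>A \<in> Ob C. W (id1 C A) = 0) \<and>
    (\<forall>f \<in> Mor C. \<forall>g \<in> Mor C. cod1 C f = dom1 C g \<longrightarrow> W (comp1 C g f) \<le> W g + W f)"

text \<open>X in Delta(A), Y in Delta(B), g : B -> A, h : A -> B.\<close>

definition interleaved ::
  "('o,'m,'t) two_cat \<Rightarrow> ('o,'m,'t,'x,'a) two_functor \<Rightarrow> 'o \<Rightarrow> 'x \<Rightarrow> 'o \<Rightarrow> 'x \<Rightarrow> 'm \<Rightarrow> 'm \<Rightarrow> bool" where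
  "interleaved C D A X B Y g h \<longleftrightarrow>
    (\<exists>\<phi> \<psi> \<alpha> \<beta>.
       \<phi> \<in> Dhom D A X (Fob D g Y) \<and>
       \<psi> \<in> Dhom D B Y (Fob D h X) \<and>
       \<alpha> \<in> cell2 C (id1 C A) (comp1 C g h) \<and>
       \<beta> \<in> cell2 C (id1 C B) (comp1 C h g) \<and>
       Dcomp D A (Fmor D g \<psi>) \<phi> = Ncomp D \<alpha> X \<and>
       Dcomp D B (Fmor D h \<phi>) \<psi> = Ncomp D \<beta> Y)"

text \<open>Points of Im(Delta) are tagged by the object of C whose category they live in.\<close>

definition ImD :: "('o,'m,'t) two_cat \<Rightarrow> ('o,'m,'t,'x,'a) two_functor \<Rightarrow> ('o \<times> 'x) set" where
  "ImD C D = {(A, X). A \<in> Ob C \<and> X \<in> DOb D A}"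

definition interleaving_distance ::
  "('o,'m,'t) two_cat \<Rightarrow> ('o,'m,'t,'x,'a) two_functor \<Rightarrow> ('m \<Rightarrow> ereal) \<Rightarrow>
   ('o \<times> 'x) \<Rightarrow> ('o \<times> 'x) \<Rightarrow> ereal" where
  "interleaving_distance C D W P Q =
    (case P of (A, X) \<Rightarrow> case Q of (B, Y) \<Rightarrow>
      Inf {max (W g) (W h) | g h. g \<in> hom1 C B A \<and> h \<in> hom1 C A B \<and> interleaved C D A X B Y g h})"

definition extended_pseudometric :: "'p set \<Rightarrow> ('p \<Rightarrow> 'p \<Rightarrow> ereal) \<Rightarrow> bool" where
  "extended_pseudometric S d \<longleftrightarrow>
    (\<forall>x \<in> S. \<forall>y \<in> S. 0 \<le> d x y) \<and>
    (\<forall>x \<in> S. d x x = 0) \<and>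
    (\<forall>x \<in> S. \<forall>y \<in> S. d x y = d y x) \<and>
    (\<forall>x \<in> S. \<forall>y \<in> S. \<forall>z \<in> S. d x z \<le> d x y + d y z)"

end

theory Submission
  imports Defs
begin

lemma inf_tri:
  fixes S T U :: "ereal set"
  assumes S: "\<And>a. a \<in> S \<Longrightarrow> 0 \<le> a" and T: "\<And>b. b \<in> T \<Longrightarrow> 0 \<le> b"
    and H: "\<And>a b. a \<in> S \<Longrightarrow> b \<in> T \<Longrightarrow> Inf U \<le> a + b"
  shows "Inf U \<le> Inf S + Inf T"
proof (cases "S = {} \<or> T = {}")
  case True
  have "0 \<le> Inf S" "0 \<le> Inf T" using S T by (auto intro: Inf_greatest)
  then show ?thesis using True by (auto simp: top_ereal_def)
next
  case False
  then have Sne: "S \<noteq> {}" and Tne: "T \<noteq> {}" by auto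
  have T0: "0 \<le> Inf T" using T by (auto intro: Inf_greatest)
  have "Inf U \<le> a + Inf T" if a: "a \<in> S" for a
  proof -
    have "Inf U \<le> (INF b\<in>T. a + b)" using H[OF a] by (auto intro: INF_greatest)
    also have "\<dots> = a + (INF b\<in>T. b)"
      by (rule INF_ereal_add_right[OF Tne]) (use S[OF a] T in auto)
    finally show ?thesis by simp
  qed
  then have "Inf U \<le> (INF a\<in>S. a + Inf T)" by (auto intro: INF_greatest)
  also have "\<dots> = (INF a\<in>S. a) + Inf T"
    by (rule INF_ereal_add_left[OF Sne]) (use S T0 in auto)
  finally show ?thesis by simp
qed


context
  fixes C :: "('o,'m,'t) two_cat"
  assumes SC: "strict_two_category C"
begin

lemmas c1 = SC[unfolded strict_two_category_def, THEN conjunct1]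
lemmas c2 = SC[unfolded strict_two_category_def, THEN conjunct2, THEN conjunct1]
lemmas c3 = SC[unfolded strict_two_category_def, THEN conjunct2, THEN conjunct2, THEN conjunct1]
lemmas c4 = SC[unfolded strict_two_category_def, THEN conjunct2, THEN conjunct2, THEN conjunct2, THEN conjunct1]
lemmas c5 = SC[unfolded strict_two_category_def, THEN conjunct2, THEN conjunct2, THEN conjunct2, THEN conjunct2, THEN conjunct1]
lemmas c6 = SC[unfolded strict_two_category_def, THEN conjunct2, THEN conjunct2, THEN conjunct2, THEN conjunct2, THEN conjunct2, THEN conjunct1]
lemmas c7 = SC[unfolded strict_two_category_def, THEN conjunct2, THEN conjunct2, THEN conjunct2, THEN conjunct2, THEN conjunct2, THEN conjunct2, THEN conjunct1]
lemmas c8 = SC[unfolded strict_two_category_def, THEN conjunct2, THEN conjunct2, THEN conjunct2, THEN conjunct2, THEN conjunct2, THEN conjunct2, THEN conjunct2, THEN conjunct1]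
lemmas c9 = SC[unfolded strict_two_category_def, THEN conjunct2, THEN conjunct2, THEN conjunct2, THEN conjunct2, THEN conjunct2, THEN conjunct2, THEN conjunct2, THEN conjunct2, THEN conjunct1]
lemmas c10 = SC[unfolded strict_two_category_def, THEN conjunct2, THEN conjunct2, THEN conjunct2, THEN conjunct2, THEN conjunct2, THEN conjunct2, THEN conjunct2, THEN conjunct2, THEN conjunct2, THEN conjunct1]
lemmas c11 = SC[unfolded strict_two_category_def, THEN conjunct2, THEN conjunct2, THEN conjunct2, THEN conjunct2, THEN conjunct2, THEN conjunct2, THEN conjunct2, THEN conjunct2, THEN conjunct2, THEN conjunct2, THEN conjunct1]
lemmas c12 = SC[unfolded strict_two_category_def, THEN conjunct2, THEN conjunct2, THEN conjunct2, THEN conjunct2, THEN conjunct2, THEN conjunct2, THEN conjunct2, THEN conjunct2, THEN conjunct2, THEN conjunct2, THEN conjunct2, THEN conjunct1]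
lemmas c13 = SC[unfolded strict_two_category_def, THEN conjunct2, THEN conjunct2, THEN conjunct2, THEN conjunct2, THEN conjunct2, THEN conjunct2, THEN conjunct2, THEN conjunct2, THEN conjunct2, THEN conjunct2, THEN conjunct2, THEN conjunct2, THEN conjunct1]
lemmas c14 = SC[unfolded strict_two_category_def, THEN conjunct2, THEN conjunct2, THEN conjunct2, THEN conjunct2, THEN conjunct2, THEN conjunct2, THEN conjunct2, THEN conjunct2, THEN conjunct2, THEN conjunct2, THEN conjunct2, THEN conjunct2, THEN conjunct2, THEN conjunct1]
lemmas c15 = SC[unfolded strict_two_category_def, THEN conjunct2, THEN conjunct2, THEN conjunct2, THEN conjunct2, THEN conjunct2, THEN conjunct2, THEN conjunct2, THEN conjunct2, THEN conjunct2, THEN conjunct2, THEN conjunct2, THEN conjunct2, THEN conjunct2, THEN conjunct2]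

lemma mor_ob: "f \<in> hom1 C A B \<Longrightarrow> A \<in> Ob C \<and> B \<in> Ob C"
  using c1 unfolding hom1_def by fastforce
lemma id_hom: "A \<in> Ob C \<Longrightarrow> id1 C A \<in> hom1 C A A"
  using c2 by fastforce
lemma comp_hom: "f \<in> hom1 C A B \<Longrightarrow> g \<in> hom1 C B E \<Longrightarrow> comp1 C g f \<in> hom1 C A E"
  using c3 mor_ob by fastforce
lemma comp_id_l: "f \<in> hom1 C A B \<Longrightarrow> comp1 C (id1 C B) f = f"
  using c4 unfolding hom1_def by fastforce
lemma comp_id_r: "f \<in> hom1 C A B \<Longrightarrow> comp1 C f (id1 C A) = f"
  using c4 unfolding hom1_def by fastforce
lemma assoc: "f \<in> hom1 C A B \<Longrightarrow> g \<in> hom1 C B E \<Longrightarrow> h \<in> hom1 C E F \<Longrightarrow>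
   comp1 C h (comp1 C g f) = comp1 C (comp1 C h g) f"
  using c5 unfolding hom1_def by fastforce
lemma id2_cell: "f \<in> hom1 C A B \<Longrightarrow> id2 C f \<in> cell2 C f f"
  using c7 unfolding hom1_def by fastforce
lemma vcomp_cell: "a \<in> cell2 C f g \<Longrightarrow> b \<in> cell2 C g h \<Longrightarrow> vcomp C b a \<in> cell2 C f h"
  using c8 unfolding cell2_def by fastforce
lemma hcomp_cell: "a \<in> cell2 C f g \<Longrightarrow> b \<in> cell2 C h k \<Longrightarrow> f \<in> hom1 C A B \<Longrightarrow> h \<in> hom1 C B E \<Longrightarrow>
   hcomp C b a \<in> cell2 C (comp1 C h f) (comp1 C k g)"
  using c11 unfolding cell2_def hom1_def by auto
lemma cell_hom: "a \<in> cell2 C f g \<Longrightarrow> f \<in> hom1 C A B \<Longrightarrow> g \<in> hom1 C A B"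
  using c6 unfolding cell2_def hom1_def by auto

context
  fixes D :: "('o,'m,'t,'x,'a) two_functor"
  assumes SF: "strict_two_functor_to_Cat C D"
begin

lemmas F1 = SF[unfolded strict_two_functor_to_Cat_def, THEN conjunct1]
lemmas F2 = SF[unfolded strict_two_functor_to_Cat_def, THEN conjunct2, THEN conjunct1]
lemmas F3 = SF[unfolded strict_two_functor_to_Cat_def, THEN conjunct2, THEN conjunct2, THEN conjunct1]
lemmas F4 = SF[unfolded strict_two_functor_to_Cat_def, THEN conjunct2, THEN conjunct2, THEN conjunct2, THEN conjunct1]
lemmas F5 = SF[unfolded strict_two_functor_to_Cat_def, THEN conjunct2, THEN conjunct2, THEN conjunct2, THEN conjunct2, THEN conjunct1]
lemmas F6 = SF[unfolded strict_two_functor_to_Cat_def, THEN conjunct2, THEN conjunct2, THEN conjunct2, THEN conjunct2, THEN conjunct2, THEN conjunct1]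
lemmas F7 = SF[unfolded strict_two_functor_to_Cat_def, THEN conjunct2, THEN conjunct2, THEN conjunct2, THEN conjunct2, THEN conjunct2, THEN conjunct2, THEN conjunct1]
lemmas F8 = SF[unfolded strict_two_functor_to_Cat_def, THEN conjunct2, THEN conjunct2, THEN conjunct2, THEN conjunct2, THEN conjunct2, THEN conjunct2, THEN conjunct2, THEN conjunct1]
lemmas F9 = SF[unfolded strict_two_functor_to_Cat_def, THEN conjunct2, THEN conjunct2, THEN conjunct2, THEN conjunct2, THEN conjunct2, THEN conjunct2, THEN conjunct2, THEN conjunct2]

lemma catat: "A \<in> Ob C \<Longrightarrow> is_category_at D A"
  using F1 by fastforce

lemma dcomp_hom: "A \<in> Ob C \<Longrightarrow> u \<in> Dhom D A P Q \<Longrightarrow> v \<in> Dhom D A Q R \<Longrightarrow> Dcomp D A v u \<in> Dhom D A P R"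
  using catat[of A] unfolding is_category_at_def Dhom_def by auto
lemma did_hom: "A \<in> Ob C \<Longrightarrow> P \<in> DOb D A \<Longrightarrow> Did D A P \<in> Dhom D A P P"
  using catat[of A] unfolding is_category_at_def by auto
lemma did_l: "A \<in> Ob C \<Longrightarrow> u \<in> Dhom D A P Q \<Longrightarrow> Dcomp D A (Did D A Q) u = u"
  using catat[of A] unfolding is_category_at_def Dhom_def by auto
lemma did_r: "A \<in> Ob C \<Longrightarrow> u \<in> Dhom D A P Q \<Longrightarrow> Dcomp D A u (Did D A P) = u"
  using catat[of A] unfolding is_category_at_def Dhom_def by auto
lemma dassoc: "A \<in> Ob C \<Longrightarrow> u \<in> Dhom D A P Q \<Longrightarrow> v \<in> Dhom D A Q R \<Longrightarrow> w \<in> Dhom D A R S \<Longrightarrow>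
   Dcomp D A w (Dcomp D A v u) = Dcomp D A (Dcomp D A w v) u"
  using catat[of A] unfolding is_category_at_def Dhom_def by auto
lemma dhom_ob: "A \<in> Ob C \<Longrightarrow> u \<in> Dhom D A P Q \<Longrightarrow> P \<in> DOb D A \<and> Q \<in> DOb D A"
  using catat[of A] unfolding is_category_at_def Dhom_def by auto
lemma fob: "f \<in> hom1 C A B \<Longrightarrow> P \<in> DOb D A \<Longrightarrow> Fob D f P \<in> DOb D B"
  using F2 unfolding hom1_def by fastforce
lemma fmor: "f \<in> hom1 C A B \<Longrightarrow> u \<in> Dhom D A P Q \<Longrightarrow> Fmor D f u \<in> Dhom D B (Fob D f P) (Fob D f Q)"
  using F2 unfolding hom1_def Dhom_def by fastforce
lemma fmor_id: "f \<in> hom1 C A B \<Longrightarrow> P \<in> DOb D A \<Longrightarrow> Fmor D f (Did D A P) = Did D B (Fob D f P)"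
  using F2 unfolding hom1_def by fastforce
lemma fmor_comp: "f \<in> hom1 C A B \<Longrightarrow> u \<in> Dhom D A P Q \<Longrightarrow> v \<in> Dhom D A Q R \<Longrightarrow>
   Fmor D f (Dcomp D A v u) = Dcomp D B (Fmor D f v) (Fmor D f u)"
  using F2 unfolding hom1_def Dhom_def by auto
lemma ncomp_hom: "a \<in> cell2 C f g \<Longrightarrow> f \<in> hom1 C A B \<Longrightarrow> P \<in> DOb D A \<Longrightarrow>
   Ncomp D a P \<in> Dhom D B (Fob D f P) (Fob D g P)"
  using F3 unfolding hom1_def cell2_def by auto
lemma natural: "a \<in> cell2 C f g \<Longrightarrow> f \<in> hom1 C A B \<Longrightarrow> u \<in> Dhom D A P Q \<Longrightarrow>
   Dcomp D B (Fmor D g u) (Ncomp D a P) = Dcomp D B (Ncomp D a Q) (Fmor D f u)"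
  using F4 unfolding hom1_def cell2_def Dhom_def by auto
lemma fob_id: "A \<in> Ob C \<Longrightarrow> P \<in> DOb D A \<Longrightarrow> Fob D (id1 C A) P = P"
  using F5 by fastforce
lemma fmor_id1: "A \<in> Ob C \<Longrightarrow> u \<in> Dhom D A P Q \<Longrightarrow> Fmor D (id1 C A) u = u"
  using F5 unfolding Dhom_def by fastforce
lemma fob_comp: "f \<in> hom1 C A B \<Longrightarrow> g \<in> hom1 C B E \<Longrightarrow> P \<in> DOb D A \<Longrightarrow>
   Fob D (comp1 C g f) P = Fob D g (Fob D f P)"
  using F6 unfolding hom1_def by auto
lemma fmor_comp1: "f \<in> hom1 C A B \<Longrightarrow> g \<in> hom1 C B E \<Longrightarrow> u \<in> Dhom D A P Q \<Longrightarrow>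
   Fmor D (comp1 C g f) u = Fmor D g (Fmor D f u)"
  using F6 unfolding hom1_def Dhom_def by auto
lemma ncomp_id2: "f \<in> hom1 C A B \<Longrightarrow> P \<in> DOb D A \<Longrightarrow> Ncomp D (id2 C f) P = Did D B (Fob D f P)"
  using F7 unfolding hom1_def by auto
lemma ncomp_vcomp: "a \<in> cell2 C f g \<Longrightarrow> b \<in> cell2 C g h \<Longrightarrow> f \<in> hom1 C A B \<Longrightarrow> P \<in> DOb D A \<Longrightarrow>
   Ncomp D (vcomp C b a) P = Dcomp D B (Ncomp D b P) (Ncomp D a P)"
  using F8 unfolding hom1_def cell2_def by auto
lemma ncomp_hcomp: "a \<in> cell2 C f g \<Longrightarrow> b \<in> cell2 C h k \<Longrightarrow> f \<in> hom1 C A B \<Longrightarrow> h \<in> hom1 C B E \<Longrightarrow>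
   P \<in> DOb D A \<Longrightarrow>
   Ncomp D (hcomp C b a) P = Dcomp D E (Fmor D k (Ncomp D a P)) (Ncomp D b (Fob D f P))"
  using F9 unfolding hom1_def cell2_def by auto


lemma half:
  assumes hg1: "g1 \<in> hom1 C B A" and hh1: "h1 \<in> hom1 C A B"
    and hg2: "g2 \<in> hom1 C E B" and hh2: "h2 \<in> hom1 C B E"
    and X: "X \<in> DOb D A"
    and p1: "\<phi>1 \<in> Dhom D A X (Fob D g1 Y)" and q1: "\<psi>1 \<in> Dhom D B Y (Fob D h1 X)"
    and a1: "\<alpha>1 \<in> cell2 C (id1 C A) (comp1 C g1 h1)"
    and e1: "Dcomp D A (Fmor D g1 \<psi>1) \<phi>1 = Ncomp D \<alpha>1 X"
    and p2: "\<phi>2 \<in> Dhom D B Y (Fob D g2 Z)" and q2: "\<psi>2 \<in> Dhom D E Z (Fob D h2 Y)"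
    and a2: "\<alpha>2 \<in> cell2 C (id1 C B) (comp1 C g2 h2)"
    and e2: "Dcomp D B (Fmor D g2 \<psi>2) \<phi>2 = Ncomp D \<alpha>2 Y"
  shows "Dcomp D A (Fmor D g1 \<phi>2) \<phi>1 \<in> Dhom D A X (Fob D (comp1 C g1 g2) Z)"
    and "\<exists>\<alpha> \<in> cell2 C (id1 C A) (comp1 C (comp1 C g1 g2) (comp1 C h2 h1)).
           Dcomp D A (Fmor D (comp1 C g1 g2) (Dcomp D E (Fmor D h2 \<psi>1) \<psi>2))
                     (Dcomp D A (Fmor D g1 \<phi>2) \<phi>1) = Ncomp D \<alpha> X"
proof -
  have A: "A \<in> Ob C" and B: "B \<in> Ob C" and E: "E \<in> Ob C" using mor_ob hg1 hg2 by auto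
  have Y: "Y \<in> DOb D B" using dhom_ob[OF B q1] by auto
  have Z: "Z \<in> DOb D E" using dhom_ob[OF E q2] by auto
  define hX where "hX = Fob D h1 X"
  have hX: "hX \<in> DOb D B" unfolding hX_def using fob[OF hh1 X] .
  have q1': "\<psi>1 \<in> Dhom D B Y hX" using q1 unfolding hX_def .
  have idB: "id1 C B \<in> hom1 C B B" using id_hom[OF B] .
  have idA: "id1 C A \<in> hom1 C A A" using id_hom[OF A] .
  have gh2: "comp1 C g2 h2 \<in> hom1 C B B" using comp_hom[OF hh2 hg2] .
  have g12: "comp1 C g1 g2 \<in> hom1 C E A" using comp_hom[OF hg2 hg1] .
  have h21: "comp1 C h2 h1 \<in> hom1 C A E" using comp_hom[OF hh1 hh2] .
  have fgh2: "\<And>P. P \<in> DOb D B \<Longrightarrow> Fob D (comp1 C g2 h2) P = Fob D g2 (Fob D h2 P)"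
    using fob_comp[OF hh2 hg2] by auto
  have fg12: "Fob D (comp1 C g1 g2) Z = Fob D g1 (Fob D g2 Z)" using fob_comp[OF hg2 hg1 Z] .
  have a2P: "\<And>P. P \<in> DOb D B \<Longrightarrow> Ncomp D \<alpha>2 P \<in> Dhom D B P (Fob D g2 (Fob D h2 P))"
    using ncomp_hom[OF a2 idB] fob_id[OF B] fgh2 by auto
  have Fg1p2: "Fmor D g1 \<phi>2 \<in> Dhom D A (Fob D g1 Y) (Fob D g1 (Fob D g2 Z))"
    using fmor[OF hg1 p2] .
  show "Dcomp D A (Fmor D g1 \<phi>2) \<phi>1 \<in> Dhom D A X (Fob D (comp1 C g1 g2) Z)"
    unfolding fg12 using dcomp_hom[OF A p1 Fg1p2] .
  define b where "b = hcomp C \<alpha>2 (id2 C h1)"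
  have b: "b \<in> cell2 C h1 (comp1 C (comp1 C g2 h2) h1)"
    using hcomp_cell[OF id2_cell[OF hh1] a2 hh1 idB] comp_id_l[OF hh1] unfolding b_def by simp
  define c where "c = hcomp C (id2 C g1) b"
  have c: "c \<in> cell2 C (comp1 C g1 h1) (comp1 C g1 (comp1 C (comp1 C g2 h2) h1))"
    using hcomp_cell[OF b id2_cell[OF hg1] hh1 hg1] unfolding c_def .
  define \<alpha> where "\<alpha> = vcomp C c \<alpha>1"
  have "\<alpha> \<in> cell2 C (id1 C A) (comp1 C g1 (comp1 C (comp1 C g2 h2) h1))"
    using vcomp_cell[OF a1 c] unfolding \<alpha>_def .
  moreover have "comp1 C g1 (comp1 C (comp1 C g2 h2) h1) = comp1 C (comp1 C g1 g2) (comp1 C h2 h1)"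
    using assoc[OF hh1 hh2 hg2] assoc[OF h21 hg2 hg1] by simp
  ultimately have \<alpha>: "\<alpha> \<in> cell2 C (id1 C A) (comp1 C (comp1 C g1 g2) (comp1 C h2 h1))" by simp
  have Nb: "Ncomp D b X = Ncomp D \<alpha>2 hX"
  proof -
    have "Ncomp D b X = Dcomp D B (Fmor D (comp1 C g2 h2) (Ncomp D (id2 C h1) X)) (Ncomp D \<alpha>2 hX)"
      unfolding b_def hX_def using ncomp_hcomp[OF id2_cell[OF hh1] a2 hh1 idB X] .
    also have "\<dots> = Dcomp D B (Did D B (Fob D g2 (Fob D h2 hX))) (Ncomp D \<alpha>2 hX)"
      using ncomp_id2[OF hh1 X] fmor_id[OF gh2 hX] fgh2[OF hX] unfolding hX_def by simp
    also have "\<dots> = Ncomp D \<alpha>2 hX" using did_l[OF B a2P[OF hX]] .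
    finally show ?thesis .
  qed
  have Fa2: "Fmor D g1 (Ncomp D \<alpha>2 hX) \<in> Dhom D A (Fob D g1 hX) (Fob D g1 (Fob D g2 (Fob D h2 hX)))"
    using fmor[OF hg1 a2P[OF hX]] .
  have Nc: "Ncomp D c X = Fmor D g1 (Ncomp D \<alpha>2 hX)"
  proof -
    have "Ncomp D c X = Dcomp D A (Fmor D g1 (Ncomp D b X)) (Ncomp D (id2 C g1) hX)"
      unfolding c_def hX_def using ncomp_hcomp[OF b id2_cell[OF hg1] hh1 hg1 X] .
    also have "\<dots> = Dcomp D A (Fmor D g1 (Ncomp D \<alpha>2 hX)) (Did D A (Fob D g1 hX))"
      using Nb ncomp_id2[OF hg1 hX] by simp
    also have "\<dots> = Fmor D g1 (Ncomp D \<alpha>2 hX)" using did_r[OF A Fa2] .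
    finally show ?thesis .
  qed
  have Na: "Ncomp D \<alpha> X = Dcomp D A (Fmor D g1 (Ncomp D \<alpha>2 hX)) (Ncomp D \<alpha>1 X)"
    unfolding \<alpha>_def using ncomp_vcomp[OF a1 c idA X] Nc by simp
  define u1 where "u1 = Fmor D g1 (Fmor D g2 (Fmor D h2 \<psi>1))"
  define u2 where "u2 = Fmor D g1 (Fmor D g2 \<psi>2)"
  define u3 where "u3 = Fmor D g1 \<phi>2"
  have Fh2q1: "Fmor D h2 \<psi>1 \<in> Dhom D E (Fob D h2 Y) (Fob D h2 hX)" using fmor[OF hh2 q1'] .
  have Fg2Fh2q1: "Fmor D g2 (Fmor D h2 \<psi>1) \<in> Dhom D B (Fob D g2 (Fob D h2 Y)) (Fob D g2 (Fob D h2 hX))"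
    using fmor[OF hg2 Fh2q1] .
  have Fg2q2: "Fmor D g2 \<psi>2 \<in> Dhom D B (Fob D g2 Z) (Fob D g2 (Fob D h2 Y))" using fmor[OF hg2 q2] .
  have u1: "u1 \<in> Dhom D A (Fob D g1 (Fob D g2 (Fob D h2 Y))) (Fob D g1 (Fob D g2 (Fob D h2 hX)))"
    unfolding u1_def using fmor[OF hg1 Fg2Fh2q1] .
  have u2: "u2 \<in> Dhom D A (Fob D g1 (Fob D g2 Z)) (Fob D g1 (Fob D g2 (Fob D h2 Y)))"
    unfolding u2_def using fmor[OF hg1 Fg2q2] .
  have u3: "u3 \<in> Dhom D A (Fob D g1 Y) (Fob D g1 (Fob D g2 Z))" unfolding u3_def using Fg1p2 .
  have s1: "Dcomp D E (Fmor D h2 \<psi>1) \<psi>2 \<in> Dhom D E Z (Fob D h2 hX)" using dcomp_hom[OF E q2 Fh2q1] .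
  have step1: "Fmor D (comp1 C g1 g2) (Dcomp D E (Fmor D h2 \<psi>1) \<psi>2) = Dcomp D A u1 u2"
  proof -
    have "Fmor D (comp1 C g1 g2) (Dcomp D E (Fmor D h2 \<psi>1) \<psi>2)
        = Fmor D g1 (Fmor D g2 (Dcomp D E (Fmor D h2 \<psi>1) \<psi>2))" using fmor_comp1[OF hg2 hg1 s1] .
    also have "\<dots> = Fmor D g1 (Dcomp D B (Fmor D g2 (Fmor D h2 \<psi>1)) (Fmor D g2 \<psi>2))"
      using fmor_comp[OF hg2 q2 Fh2q1] by simp
    also have "\<dots> = Dcomp D A u1 u2" unfolding u1_def u2_def using fmor_comp[OF hg1 Fg2q2 Fg2Fh2q1] .
    finally show ?thesis .
  qed
  have a2Y: "Ncomp D \<alpha>2 Y \<in> Dhom D B Y (Fob D g2 (Fob D h2 Y))" using a2P[OF Y] .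
  have u23: "Dcomp D A u2 u3 = Fmor D g1 (Ncomp D \<alpha>2 Y)"
    unfolding u2_def u3_def using fmor_comp[OF hg1 p2 Fg2q2] e2 by simp
  have Fa2Y: "Fmor D g1 (Ncomp D \<alpha>2 Y) \<in> Dhom D A (Fob D g1 Y) (Fob D g1 (Fob D g2 (Fob D h2 Y)))"
    using fmor[OF hg1 a2Y] .
  have nat: "Dcomp D B (Fmor D g2 (Fmor D h2 \<psi>1)) (Ncomp D \<alpha>2 Y) = Dcomp D B (Ncomp D \<alpha>2 hX) \<psi>1"
  proof -
    have "Dcomp D B (Fmor D (comp1 C g2 h2) \<psi>1) (Ncomp D \<alpha>2 Y)
          = Dcomp D B (Ncomp D \<alpha>2 hX) (Fmor D (id1 C B) \<psi>1)" using natural[OF a2 idB q1'] .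
    then show ?thesis using fmor_comp1[OF hh2 hg2 q1'] fmor_id1[OF B q1'] by simp
  qed
  have u1a: "Dcomp D A u1 (Fmor D g1 (Ncomp D \<alpha>2 Y)) = Dcomp D A (Fmor D g1 (Ncomp D \<alpha>2 hX)) (Fmor D g1 \<psi>1)"
  proof -
    have "Dcomp D A u1 (Fmor D g1 (Ncomp D \<alpha>2 Y))
        = Fmor D g1 (Dcomp D B (Fmor D g2 (Fmor D h2 \<psi>1)) (Ncomp D \<alpha>2 Y))"
      unfolding u1_def using fmor_comp[OF hg1 a2Y Fg2Fh2q1] by simp
    also have "\<dots> = Fmor D g1 (Dcomp D B (Ncomp D \<alpha>2 hX) \<psi>1)" using nat by simp
    also have "\<dots> = Dcomp D A (Fmor D g1 (Ncomp D \<alpha>2 hX)) (Fmor D g1 \<psi>1)"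
      using fmor_comp[OF hg1 q1' a2P[OF hX]] .
    finally show ?thesis .
  qed
  have Fg1q1: "Fmor D g1 \<psi>1 \<in> Dhom D A (Fob D g1 Y) (Fob D g1 hX)" using fmor[OF hg1 q1'] .
  have "Dcomp D A (Fmor D (comp1 C g1 g2) (Dcomp D E (Fmor D h2 \<psi>1) \<psi>2))
                     (Dcomp D A (Fmor D g1 \<phi>2) \<phi>1)
      = Dcomp D A (Dcomp D A u1 u2) (Dcomp D A u3 \<phi>1)" using step1 unfolding u3_def by simp
  also have "\<dots> = Dcomp D A u1 (Dcomp D A u2 (Dcomp D A u3 \<phi>1))"
    using dassoc[OF A dcomp_hom[OF A p1 u3] u2 u1] by simp
  also have "\<dots> = Dcomp D A u1 (Dcomp D A (Dcomp D A u2 u3) \<phi>1)"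
    using dassoc[OF A p1 u3 u2] by simp
  also have "\<dots> = Dcomp D A u1 (Dcomp D A (Fmor D g1 (Ncomp D \<alpha>2 Y)) \<phi>1)" using u23 by simp
  also have "\<dots> = Dcomp D A (Dcomp D A u1 (Fmor D g1 (Ncomp D \<alpha>2 Y))) \<phi>1"
    using dassoc[OF A p1 Fa2Y u1] .
  also have "\<dots> = Dcomp D A (Dcomp D A (Fmor D g1 (Ncomp D \<alpha>2 hX)) (Fmor D g1 \<psi>1)) \<phi>1"
    using u1a by simp
  also have "\<dots> = Dcomp D A (Fmor D g1 (Ncomp D \<alpha>2 hX)) (Dcomp D A (Fmor D g1 \<psi>1) \<phi>1)"
    using dassoc[OF A p1 Fg1q1 Fa2] by simp
  also have "\<dots> = Ncomp D \<alpha> X" using Na e1 by simp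
  finally show "\<exists>\<alpha> \<in> cell2 C (id1 C A) (comp1 C (comp1 C g1 g2) (comp1 C h2 h1)).
           Dcomp D A (Fmor D (comp1 C g1 g2) (Dcomp D E (Fmor D h2 \<psi>1) \<psi>2))
                     (Dcomp D A (Fmor D g1 \<phi>2) \<phi>1) = Ncomp D \<alpha> X" using \<alpha> by blast
qed


lemma interleaved_sym: "interleaved C D A X B Y g h \<Longrightarrow> interleaved C D B Y A X h g"
  unfolding interleaved_def by blast

lemma interleaved_refl: "A \<in> Ob C \<Longrightarrow> X \<in> DOb D A \<Longrightarrow> interleaved C D A X A X (id1 C A) (id1 C A)"
proof -
  assume A: "A \<in> Ob C" and X: "X \<in> DOb D A"
  have idA: "id1 C A \<in> hom1 C A A" using id_hom[OF A] .
  have d: "Did D A X \<in> Dhom D A X (Fob D (id1 C A) X)" using did_hom[OF A X] fob_id[OF A X] by simp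
  have c: "id2 C (id1 C A) \<in> cell2 C (id1 C A) (comp1 C (id1 C A) (id1 C A))"
    using id2_cell[OF idA] comp_id_l[OF idA] by simp
  have e: "Dcomp D A (Fmor D (id1 C A) (Did D A X)) (Did D A X) = Ncomp D (id2 C (id1 C A)) X"
    using fmor_id1[OF A did_hom[OF A X]] did_l[OF A did_hom[OF A X]] ncomp_id2[OF idA X] fob_id[OF A X]
    by simp
  show ?thesis unfolding interleaved_def using d c e by blast
qed

lemma interleaved_comp:
  assumes "interleaved C D A X B Y g1 h1" "interleaved C D B Y E Z g2 h2"
    and hg1: "g1 \<in> hom1 C B A" and hh1: "h1 \<in> hom1 C A B"
    and hg2: "g2 \<in> hom1 C E B" and hh2: "h2 \<in> hom1 C B E"
    and X: "X \<in> DOb D A" and Z: "Z \<in> DOb D E"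
  shows "interleaved C D A X E Z (comp1 C g1 g2) (comp1 C h2 h1)"
proof -
  obtain \<phi>1 \<psi>1 \<alpha>1 \<beta>1 where p1: "\<phi>1 \<in> Dhom D A X (Fob D g1 Y)" and q1: "\<psi>1 \<in> Dhom D B Y (Fob D h1 X)"
    and a1: "\<alpha>1 \<in> cell2 C (id1 C A) (comp1 C g1 h1)" and b1: "\<beta>1 \<in> cell2 C (id1 C B) (comp1 C h1 g1)"
    and e1: "Dcomp D A (Fmor D g1 \<psi>1) \<phi>1 = Ncomp D \<alpha>1 X"
    and f1: "Dcomp D B (Fmor D h1 \<phi>1) \<psi>1 = Ncomp D \<beta>1 Y"
    using assms(1) unfolding interleaved_def by blast
  obtain \<phi>2 \<psi>2 \<alpha>2 \<beta>2 where p2: "\<phi>2 \<in> Dhom D B Y (Fob D g2 Z)" and q2: "\<psi>2 \<in> Dhom D E Z (Fob D h2 Y)"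
    and a2: "\<alpha>2 \<in> cell2 C (id1 C B) (comp1 C g2 h2)" and b2: "\<beta>2 \<in> cell2 C (id1 C E) (comp1 C h2 g2)"
    and e2: "Dcomp D B (Fmor D g2 \<psi>2) \<phi>2 = Ncomp D \<alpha>2 Y"
    and f2: "Dcomp D E (Fmor D h2 \<phi>2) \<psi>2 = Ncomp D \<beta>2 Z"
    using assms(2) unfolding interleaved_def by blast
  note H1 = half[OF hg1 hh1 hg2 hh2 X p1 q1 a1 e1 p2 q2 a2 e2]
  note H2 = half[OF hh2 hg2 hh1 hg1 Z q2 p2 b2 f2 q1 p1 b1 f1]
  show ?thesis unfolding interleaved_def using H1 H2 by blast
qed

end
end

lemma ImD_E: "P \<in> ImD C D \<Longrightarrow> (\<And>A X. P = (A, X) \<Longrightarrow> A \<in> Ob C \<Longrightarrow> X \<in> DOb D A \<Longrightarrow> thesis) \<Longrightarrow> thesis"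
  unfolding ImD_def by (cases P) auto

theorem theorem3p16:
  fixes C :: "('o,'m,'t) two_cat"
    and D :: "('o,'m,'t,'x,'a) two_functor"
    and W :: "'m \<Rightarrow> ereal"
  assumes "strict_two_category C"
    and "strict_two_functor_to_Cat C D"
    and "lawvere_weight C W"
  shows "extended_pseudometric (ImD C D) (interleaving_distance C D W)"
proof -
  note SC = assms(1) and SF = assms(2)
  have W0: "\<And>g. g \<in> Mor C \<Longrightarrow> 0 \<le> W g" and Wid: "\<And>A. A \<in> Ob C \<Longrightarrow> W (id1 C A) = 0"
    and Wc: "\<And>f g. f \<in> Mor C \<Longrightarrow> g \<in> Mor C \<Longrightarrow> cod1 C f = dom1 C g \<Longrightarrow> W (comp1 C g f) \<le> W g + W f"
    using assms(3) unfolding lawvere_weight_def by auto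
  define S where "S A X B Y = {max (W g) (W h) | g h. g \<in> hom1 C B A \<and> h \<in> hom1 C A B \<and>
      interleaved C D A X B Y g h}" for A X B Y
  have dS: "interleaving_distance C D W (A, X) (B, Y) = Inf (S A X B Y)" for A X B Y
    by (simp add: interleaving_distance_def S_def)
  have nn: "0 \<le> a" if "a \<in> S A X B Y" for a A X B Y
    using that W0 unfolding S_def hom1_def by (auto simp: le_max_iff_disj)
  have pos: "0 \<le> Inf (S A X B Y)" for A X B Y using nn by (auto intro: Inf_greatest)
  have diag: "Inf (S A X A X) = 0" if A: "A \<in> Ob C" and X: "X \<in> DOb D A" for A X
  proof -
    have "0 \<in> S A X A X" unfolding S_def using interleaved_refl[OF SC SF A X] id_hom[OF SC A] Wid[OF A]
      by (auto intro!: exI[of _ "id1 C A"])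
    then have "Inf (S A X A X) \<le> 0" by (rule Inf_lower)
    then show ?thesis using pos[of A X A X] by simp
  qed
  have sym: "S A X B Y = S B Y A X" for A X B Y
    unfolding S_def using interleaved_sym[OF SC SF] by (auto; metis max.commute)
  have tri: "Inf (S A X E Z) \<le> Inf (S A X B Y) + Inf (S B Y E Z)"
    if X: "X \<in> DOb D A" and Z: "Z \<in> DOb D E" for A X B Y E Z
  proof (rule inf_tri)
    show "0 \<le> a" if "a \<in> S A X B Y" for a using nn that .
    show "0 \<le> a" if "a \<in> S B Y E Z" for a using nn that .
    fix a b assume a: "a \<in> S A X B Y" and b: "b \<in> S B Y E Z"
    obtain g1 h1 where a': "a = max (W g1) (W h1)" and hg1: "g1 \<in> hom1 C B A" and hh1: "h1 \<in> hom1 C A B"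
      and i1: "interleaved C D A X B Y g1 h1" using a unfolding S_def by blast
    obtain g2 h2 where b': "b = max (W g2) (W h2)" and hg2: "g2 \<in> hom1 C E B" and hh2: "h2 \<in> hom1 C B E"
      and i2: "interleaved C D B Y E Z g2 h2" using b unfolding S_def by blast
    have c: "max (W (comp1 C g1 g2)) (W (comp1 C h2 h1)) \<in> S A X E Z"
      unfolding S_def using comp_hom[OF SC hg2 hg1] comp_hom[OF SC hh1 hh2]
        interleaved_comp[OF SC SF i1 i2 hg1 hh1 hg2 hh2 X Z] by blast
    have w1: "W (comp1 C g1 g2) \<le> W g1 + W g2" using Wc hg1 hg2 unfolding hom1_def by auto
    have w2: "W (comp1 C h2 h1) \<le> W h2 + W h1" using Wc hh1 hh2 unfolding hom1_def by auto
    have "W g1 + W g2 \<le> a + b" "W h2 + W h1 \<le> b + a" unfolding a' b' by (auto intro: add_mono)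
    then have "max (W (comp1 C g1 g2)) (W (comp1 C h2 h1)) \<le> a + b"
      using w1 w2 by (auto simp: add.commute)
    then show "Inf (S A X E Z) \<le> a + b" using Inf_lower[OF c] by (rule order_trans[rotated])
  qed
  show ?thesis
    unfolding extended_pseudometric_def
  proof (intro conjI ballI)
    fix P Q assume "P \<in> ImD C D" "Q \<in> ImD C D"
    then show "0 \<le> interleaving_distance C D W P Q"
      by (elim ImD_E) (simp add: dS pos)
  next
    fix P assume "P \<in> ImD C D"
    then show "interleaving_distance C D W P P = 0"
      by (elim ImD_E) (simp add: dS diag)
  next
    fix P Q assume "P \<in> ImD C D" "Q \<in> ImD C D"
    then show "interleaving_distance C D W P Q = interleaving_distance C D W Q P"
      by (elim ImD_E) (simp add: dS sym)
  next
    fix P Q R assume "P \<in> ImD C D" "Q \<in> ImD C D" "R \<in> ImD C D"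
    then show "interleaving_distance C D W P R \<le> interleaving_distance C D W P Q + interleaving_distance C D W Q R"
      by (elim ImD_E) (simp add: dS tri)
  qed
qed

end
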